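(* Let $\lambda>1$, $A=\mathrm{diag}(1,\lambda)$, and $f(x)=\tfrac12 x^TAx$ on $\mathbb{R}^2$. Consider the iteration $x_{k+1}=x_k-\alpha_kg_k$, $g_k=Ax_k$, where $x_1\in\mathbb{R}^2$, $x_2=x_1-\alpha_1g_1$ for some $\alpha_1>0$, and for $k\ge 2$ $$\alpha_k=\gamma_k\frac{s_{k-1}^Ts_{k-1}}{s_{k-1}^Ty_{k-1}}+(1-\gamma_k)\frac{s_{k-1}^Ty_{k-1}}{y_{k-1}^Ty_{k-1}},\qquad s_{k-1}=x_k-x_{k-1},\ y_{k-1}=g_k-g_{k-1},$$ with $\gamma_k\in(0,1)$ for all $k$. Assume $g_1^{(i)}\neq0$ and $g_2^{(i)}\ne0$ for $i=1,2$. Let $q_k=(g_k^{(1)})^2/(g_k^{(2)})^2$, $M_k=\log q_k$, let $\theta$ be a root of $\theta^2-\theta+2=0$, and $\xi_k=M_k+(\theta-1)M_{k-1}$. If $|\xi_2|>8\log\lambda$, then $\{\|g_k\|\}$ converges to zero $R$-superlinearly.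
   Context: $g_k^{(i)}$ is the $i$-th component of $g_k$ and $\|\cdot\|$ the Euclidean norm. A nonnegative sequence $\{a_k\}$ converges to zero $R$-superlinearly if $\lim_{k\to\infty}a_k^{1/k}=0$. *)

theory Defs
  imports "HOL-Analysis.Analysis"
begin

definition diagA :: "real \<Rightarrow> real^2^2" where
  "diagA lam = (\<chi> i j. if i = j then (if i = 1 then 1 else lam) else 0)"

definition fq :: "real \<Rightarrow> real^2 \<Rightarrow> real" where
  "fq lam x = (1/2) * (x \<bullet> (diagA lam *v x))"

end

theory Submission
  imports Defs "HOL-Real_Asymp.Real_Asymp"
begin


lemma diagA_comp1: "(diagA lam *v y) $ 1 = y $ 1"
  by (simp add: diagA_def matrix_vector_mult_def sum_2)
lemma diagA_comp2: "(diagA lam *v y) $ 2 = lam * y $ 2"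
  by (simp add: diagA_def matrix_vector_mult_def sum_2)
lemma inner2: "(a::real^2) \<bullet> b = a$1 * b$1 + a$2 * b$2"
  by (simp add: inner_vec_def sum_2)
lemma norm2_le: "norm (a::real^2) \<le> \<bar>a$1\<bar> + \<bar>a$2\<bar>"
  using norm_le_l1_cart[of a] by (simp add: sum_2)


lemma step_alg:
  fixes w z lam c a :: real
  assumes w: "w > 0" and z: "z > 0" and lam: "lam > 1" and c0: "0 < c" and c1: "c < 1"
    and a: "a = c * ((w+z)/(w+lam*z)) + (1-c) * ((w+lam*z)/(w+lam^2*z))"
  shows "1/lam < a" "a < 1" "\<bar>1-a\<bar> * \<bar>1-lam*a\<bar> \<le> lam^3 * (w*z/(w+z)^2)"
    "\<exists>\<rho>. 1 \<le> \<rho> \<and> \<rho> \<le> lam \<and> 1 - a = -(z/w)*\<rho>*(1-lam*a)"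
proof -
  define P where "P = w + lam*z"
  define Q where "Q = w + lam^2*z"
  have P: "P \<ge> w + z" using z lam unfolding P_def by (simp add: mult_right_mono)
  have Q: "Q \<ge> P" using z lam unfolding P_def Q_def power2_eq_square
    by (simp add: mult_right_mono)
  have Pp: "P > 0" using P w z by linarith
  have Qp: "Q > 0" using P Q w z by linarith
  define N where "N = c/P + (1-c)*lam/Q"
  define D where "D = c/P + (1-c)/Q"
  have Dp: "D > 0" unfolding D_def using c0 c1 Pp Qp by (simp add: add_pos_pos)
  have DN: "D \<le> N" unfolding D_def N_def using c1 Qp lam
    by (simp add: divide_right_mono)
  have ND: "N \<le> lam * D" unfolding D_def N_def using c0 c1 Pp Qp lam
    by (simp add: algebra_simps divide_right_mono)
  have Dle: "D \<le> 1/(w+z)"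
  proof -
    have "c/P \<le> c/(w+z)" using P c0 w z by (simp add: frac_le)
    moreover have "(1-c)/Q \<le> (1-c)/(w+z)" using P Q c1 w z by (simp add: frac_le)
    moreover have "c/(w+z) + (1-c)/(w+z) = 1/(w+z)" by (simp add: add_divide_distrib[symmetric])
    ultimately show ?thesis unfolding D_def by linarith
  qed
  have e1: "1 - a = (lam-1)*z*N"
  proof -
    have "1 - a = c*((P-(w+z))/P) + (1-c)*((Q-P)/Q)"
      unfolding a P_def[symmetric] Q_def[symmetric] using Pp Qp by (simp add: field_simps)
    also have "\<dots> = (lam-1)*z*N" unfolding N_def P_def Q_def
      by (simp add: algebra_simps power2_eq_square add_divide_distrib diff_divide_distrib)
    finally show ?thesis .
  qed
  have e2: "1 - lam*a = -((lam-1)*w*D)"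
  proof -
    have "1 - lam*a = c*((P-lam*(w+z))/P) + (1-c)*((Q-lam*P)/Q)"
      unfolding a P_def[symmetric] Q_def[symmetric] using Pp Qp by (simp add: field_simps)
    also have "\<dots> = -((lam-1)*w*D)" unfolding D_def P_def Q_def
      by (simp add: algebra_simps power2_eq_square add_divide_distrib diff_divide_distrib)
    finally show ?thesis .
  qed
  have Np: "N > 0" using DN Dp by linarith
  have pos1: "1 - a > 0" using e1 lam z Np by simp
  have neg2: "1 - lam*a < 0" using e2 lam w Dp by simp
  show "a < 1" using pos1 by simp
  show "1/lam < a" using neg2 lam by (simp add: field_simps)
  have "\<bar>1-a\<bar> * \<bar>1-lam*a\<bar> = (1-a) * (-(1-lam*a))"
    using pos1 neg2 by simp
  also have "\<dots> = (lam-1)^2*(w*z)*(N*D)"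
    unfolding e1 e2 by (simp add: power2_eq_square algebra_simps)
  also have "\<dots> \<le> lam^2*(w*z)*(lam*(D*D))"
  proof (rule mult_mono)
    show "(lam-1)^2*(w*z) \<le> lam^2*(w*z)" using lam w z
      by (intro mult_right_mono power_mono) auto
    show "N*D \<le> lam*(D*D)" using ND Dp by (simp add: mult_right_mono mult.assoc[symmetric])
  qed (use w z lam Np Dp in auto)
  also have "\<dots> \<le> lam^2*(w*z)*(lam*((1/(w+z))*(1/(w+z))))"
    using Dle Dp w z lam by (intro mult_left_mono mult_mono) auto
  also have "\<dots> = lam^3 * (w*z/(w+z)^2)" by (simp add: power2_eq_square power3_eq_cube)
  finally show "\<bar>1-a\<bar> * \<bar>1-lam*a\<bar> \<le> lam^3 * (w*z/(w+z)^2)" .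
  show "\<exists>\<rho>. 1 \<le> \<rho> \<and> \<rho> \<le> lam \<and> 1 - a = -(z/w)*\<rho>*(1-lam*a)"
  proof (intro exI conjI)
    show "1 \<le> N/D" using DN Dp by simp
    show "N/D \<le> lam" using ND Dp by (simp add: field_simps)
    have "-(z/w)*(N/D)*(1-lam*a) = (lam-1)*z*N" unfolding e2 using w Dp by (simp add: field_simps)
    then show "1 - a = -(z/w)*(N/D)*(1-lam*a)" using e1 by simp
  qed
qed


lemma theta_facts:
  fixes \<theta> :: complex assumes "\<theta>^2 - \<theta> + 2 = 0"
  shows "Re \<theta> = 1/2" "(Im \<theta>)^2 = 7/4"
proof -
  have r: "(Re \<theta>)^2 - (Im \<theta>)^2 - Re \<theta> + 2 = 0"
    using arg_cong[OF assms, of Re] by (simp add: power2_eq_square)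
  have i: "2 * Re \<theta> * Im \<theta> - Im \<theta> = 0"
    using arg_cong[OF assms, of Im] by (simp add: power2_eq_square)
  have "Im \<theta> \<noteq> 0"
  proof
    assume "Im \<theta> = 0"
    with r have "(Re \<theta> - 1/2)^2 + 7/4 = 0" by (simp add: power2_eq_square algebra_simps)
    moreover have "(Re \<theta> - 1/2)^2 \<ge> 0" by simp
    ultimately show False by linarith
  qed
  with i have "(2 * Re \<theta> - 1) * Im \<theta> = 0" by (simp add: algebra_simps)
  with \<open>Im \<theta> \<noteq> 0\<close> show re: "Re \<theta> = 1/2" by simp
  with r show "(Im \<theta>)^2 = 7/4" by (simp add: power2_eq_square)
qed

lemma frac_aux:
  fixes w z :: real assumes w: "w > 0" and z: "z > 0"
  shows "w*z/(w+z)^2 \<le> w/z"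
proof -
  have "z^2 \<le> (w+z)^2" using w z by (intro power_mono) auto
  then have "w*z/(w+z)^2 \<le> w*z/z^2" using w z by (intro divide_left_mono) auto
  also have "\<dots> = w/z" using z by (simp add: power2_eq_square)
  finally show ?thesis .
qed

lemma seq_part:
  fixes M S :: "nat \<Rightarrow> real" and L C :: real and \<theta> :: complex
  assumes L: "L > 0" and th: "\<theta>^2 - \<theta> + 2 = 0"
    and rec: "\<And>k. k \<ge> 2 \<Longrightarrow> \<bar>M (Suc k) - M k + 2 * M (k-1)\<bar> \<le> 2*L"
    and Sst: "\<And>k. k \<ge> 2 \<Longrightarrow> S (Suc k) \<le> S k + 3*L - \<bar>M (k-1)\<bar>"
    and xi: "cmod (complex_of_real (M 2) + (\<theta> - 1) * complex_of_real (M 1)) > 8*L"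
  shows "filterlim (\<lambda>k. (C + (S k/2 + \<bar>M k\<bar>/4)) / real k) at_bot sequentially"
proof -
  note tf = theta_facts[OF th]
  have cth: "cmod \<theta> \<ge> 5/4"
  proof -
    have "cmod \<theta> = sqrt 2" unfolding cmod_def tf by (simp add: power2_eq_square)
    moreover have "sqrt 2 \<ge> sqrt ((5/4)^2)" by (subst real_sqrt_le_iff) (simp add: power2_eq_square)
    ultimately show ?thesis by simp
  qed
  have cth1: "cmod (\<theta> - 1) \<le> 2"
  proof -
    have "cmod (\<theta> - 1) = sqrt 2" unfolding cmod_def by (simp add: tf) (simp add: power2_eq_square)
    moreover have "sqrt 2 \<le> sqrt (2^2)" by (subst real_sqrt_le_iff) simp
    ultimately show ?thesis by simp
  qed
  define \<xi> where "\<xi> k = complex_of_real (M k) + (\<theta> - 1) * complex_of_real (M (k-1))" for k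
  define d where "d k = M (Suc k) - M k + 2 * M (k-1)" for k
  have xirec: "\<xi> (Suc k) = \<theta> * \<xi> k + complex_of_real (d k)" for k
  proof -
    have "\<xi> (Suc k) - (\<theta> * \<xi> k + complex_of_real (d k)) = - ((\<theta>^2 - \<theta> + 2) * complex_of_real (M (k-1)))"
      unfolding \<xi>_def d_def by (simp add: algebra_simps power2_eq_square)
    then show ?thesis using th by simp
  qed
  define e where "e = cmod (\<xi> 2) - 8*L"
  have e: "e > 0" using xi unfolding e_def \<xi>_def by simp
  have grow: "cmod (\<xi> (m+2)) \<ge> 8*L + (5/4)^m * e" for m
  proof (induction m)
    case 0 then show ?case unfolding e_def by (simp add: numeral_2_eq_2)
  next
    case (Suc m)
    have dd: "cmod (complex_of_real (d (m+2))) \<le> 2*L" unfolding norm_of_real d_def using rec[of "m+2"] by simp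
    have "cmod (\<xi> (Suc m + 2)) = cmod (\<theta> * \<xi> (m+2) + complex_of_real (d (m+2)))"
      using xirec[of "m+2"] by simp
    also have "\<dots> \<ge> cmod (\<theta> * \<xi> (m+2)) - cmod (complex_of_real (d (m+2)))"
      using norm_triangle_ineq2[of "\<theta> * \<xi> (m+2)" "- complex_of_real (d (m+2))"] by simp
    finally have "cmod (\<xi> (Suc m + 2)) \<ge> cmod \<theta> * cmod (\<xi> (m+2)) - 2*L"
      using dd by (simp add: norm_mult)
    moreover have "cmod \<theta> * cmod (\<xi> (m+2)) \<ge> 5/4 * (8*L + (5/4)^m * e)"
      using cth Suc.IH L e by (intro mult_mono) auto
    ultimately show ?case by simp
  qed
  have Mxi: "\<bar>M k\<bar> + \<bar>M (k-1)\<bar> \<ge> cmod (\<xi> k) / 2" for k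
  proof -
    have "cmod (\<xi> k) \<le> cmod (complex_of_real (M k)) + cmod ((\<theta> - 1) * complex_of_real (M (k-1)))"
      unfolding \<xi>_def by (rule norm_triangle_ineq)
    also have "\<dots> \<le> \<bar>M k\<bar> + 2 * \<bar>M (k-1)\<bar>"
      using cth1 by (simp add: norm_mult mult_right_mono)
    finally show ?thesis by simp
  qed
  have Ssum: "S (m+2) \<le> S 2 + 3*L*m - (\<Sum>j<m. \<bar>M (Suc j)\<bar>)" for m
  proof (induction m)
    case (Suc m)
    have "S (Suc m + 2) \<le> S (m+2) + 3*L - \<bar>M (Suc m)\<bar>" using Sst[of "m+2"] by simp
    then show ?case using Suc.IH by (simp add: algebra_simps)
  next
    case 0 show ?case
      by (simp only: add_0 of_nat_0 mult_zero_right lessThan_0 sum.empty diff_zero add_0_right order_refl)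
  qed
  have drec: "\<bar>d k\<bar> \<le> 2*L" if "k \<ge> 2" for k using rec[OF that] unfolding d_def .
  define c where "c = (4/5)^4 * e / 16"
  have cpos: "c > 0" using e unfolding c_def by simp
  have key: "S k/2 + \<bar>M k\<bar>/4 \<le> S 2/2 + 3/2*L*real k - c * (5/4)^k" if "k \<ge> 5" for k
  proof -
    define m where "m = k - 5"
    have k: "k = m + 5" using that unfolding m_def by simp
    have r4: "M (m+5) = M (m+4) - 2*M (m+3) + d (m+4)" unfolding d_def by (simp add: numeral_eq_Suc)
    have r3: "M (m+4) = M (m+3) - 2*M (m+2) + d (m+3)" unfolding d_def by (simp add: numeral_eq_Suc)
    have r2: "M (m+3) = M (m+2) - 2*M (m+1) + d (m+2)" unfolding d_def by (simp add: numeral_eq_Suc)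
    have d4: "\<bar>d (m+4)\<bar> \<le> 2*L" and d3: "\<bar>d (m+3)\<bar> \<le> 2*L" and d2: "\<bar>d (m+2)\<bar> \<le> 2*L"
      by (auto intro: drec)
    have b1: "\<bar>M (m+5)\<bar> \<le> \<bar>M (m+3)\<bar> + 2*\<bar>M (m+2)\<bar> + 4*L"
      using r4 r3 d4 d3 by linarith
    have b2: "\<bar>M (m+5)\<bar> \<le> 2*\<bar>M (m+3)\<bar> + \<bar>M (m+2)\<bar> + 2*\<bar>M (m+1)\<bar> + 6*L"
      using b1 r2 d2 by linarith
    have sumge: "(\<Sum>j<m+3. \<bar>M (Suc j)\<bar>) \<ge> \<bar>M (m+3)\<bar> + \<bar>M (m+2)\<bar> + \<bar>M (m+1)\<bar>"
    proof -
      have "(\<Sum>j<m+3. \<bar>M (Suc j)\<bar>) = (\<Sum>j<m. \<bar>M (Suc j)\<bar>) + \<bar>M (m+1)\<bar> + \<bar>M (m+2)\<bar> + \<bar>M (m+3)\<bar>"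
        by (simp add: numeral_eq_Suc)
      moreover have "(\<Sum>j<m. \<bar>M (Suc j)\<bar>) \<ge> 0" by (simp add: sum_nonneg)
      ultimately show ?thesis by linarith
    qed
    have S5: "S (m+5) \<le> S 2 + 3*L*(m+3) - (\<Sum>j<m+3. \<bar>M (Suc j)\<bar>)"
      using Ssum[of "m+3"] by (simp add: numeral_eq_Suc)
    have x3: "\<bar>M (m+3)\<bar> + \<bar>M (m+2)\<bar> \<ge> cmod (\<xi> (m+3)) / 2" using Mxi[of "m+3"] by simp
    have g3: "cmod (\<xi> (m+3)) \<ge> 8*L + (5/4)^(m+1) * e" using grow[of "m+1"] by (simp add: numeral_eq_Suc)
    have pw: "(5/4::real)^(m+1) = (5/4)^k * (4/5)^4" unfolding k
      by (simp add: power_add numeral_eq_Suc)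
    have "2 * S (m+5) + \<bar>M (m+5)\<bar> \<le> 2 * S 2 + 6*L*(m+4) - cmod (\<xi> (m+3)) / 4"
    proof -
      have "6*L*real (m+4) = 2*(3*L*real (m+3)) + 6*L" by (simp add: algebra_simps)
      moreover have "\<bar>M (m+1)\<bar> \<ge> 0" "\<bar>M (m+2)\<bar> \<ge> 0" "\<bar>M (m+3)\<bar> \<ge> 0" by simp_all
      ultimately show ?thesis using S5 sumge b1 b2 x3 L by linarith
    qed
    then have "2 * S k + \<bar>M k\<bar> \<le> 2 * S 2 + 6*L*k - (5/4)^(m+1) * e / 4"
      using g3 L unfolding k by (simp add: algebra_simps)
    then show ?thesis unfolding pw c_def by (simp add: algebra_simps)
  qed
  have lim: "filterlim (\<lambda>k::nat. (C + S 2/2 + 3/2*L*real k - c*(5/4)^k)/real k) at_bot sequentially"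
    using cpos by real_asymp
  show ?thesis
    unfolding filterlim_at_bot
  proof
    fix Z
    have "eventually (\<lambda>k. (C + S 2/2 + 3/2*L*real k - c*(5/4)^k)/real k \<le> Z) sequentially"
      using lim unfolding filterlim_at_bot by blast
    moreover have "eventually (\<lambda>k::nat. k \<ge> 5) sequentially" by (rule eventually_ge_at_top)
    ultimately show "eventually (\<lambda>k. (C + (S k/2 + \<bar>M k\<bar>/4)) / real k \<le> Z) sequentially"
    proof eventually_elim
      case (elim k)
      have "(C + (S k/2 + \<bar>M k\<bar>/4)) / real k \<le> (C + S 2/2 + 3/2*L*real k - c*(5/4)^k)/real k"
        using key[OF elim(2)] elim(2) by (intro divide_right_mono) auto
      then show ?case using elim(1) by linarith
    qed
  qed
qed


theorem theorem2:
  fixes lam :: real and x g :: "nat \<Rightarrow> real^2" and \<alpha> \<gamma> :: "nat \<Rightarrow> real"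
    and \<theta> :: complex
  assumes lam: "lam > 1"
    and g_def: "\<And>k. g k = diagA lam *v x k"
    and step: "\<And>k. k \<ge> 1 \<Longrightarrow> x (Suc k) = x k - \<alpha> k *\<^sub>R g k"
    and alpha1: "\<alpha> 1 > 0"
    and alphak: "\<And>k. k \<ge> 2 \<Longrightarrow>
       \<alpha> k = \<gamma> k * (((x k - x (k-1)) \<bullet> (x k - x (k-1))) / ((x k - x (k-1)) \<bullet> (g k - g (k-1))))
            + (1 - \<gamma> k) * (((x k - x (k-1)) \<bullet> (g k - g (k-1))) / ((g k - g (k-1)) \<bullet> (g k - g (k-1))))"
    and gamma: "\<And>k. k \<ge> 1 \<Longrightarrow> 0 < \<gamma> k \<and> \<gamma> k < 1"
    and g1: "\<And>i. g 1 $ i \<noteq> 0" and g2: "\<And>i. g 2 $ i \<noteq> 0"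
    and theta: "\<theta>^2 - \<theta> + 2 = 0"
    and xi: "cmod (complex_of_real (ln ((g 2 $ 1)^2 / (g 2 $ 2)^2))
               + (\<theta> - 1) * complex_of_real (ln ((g 1 $ 1)^2 / (g 1 $ 2)^2))) > 8 * ln lam"
  shows "(\<lambda>k. root k (norm (g k))) \<longlonglongrightarrow> 0"
  
proof -
  define u where "u k = g k $ 1" for k
  define v where "v k = g k $ 2" for k
  define L where "L = ln lam"
  have L: "L > 0" unfolding L_def using lam by simp
  have F1: "u (Suc k) = (1 - \<alpha> k) * u k \<and> v (Suc k) = (1 - lam * \<alpha> k) * v k" if "k \<ge> 1" for k
  proof -
    have "g (Suc k) = diagA lam *v (x k - \<alpha> k *\<^sub>R g k)" using g_def step[OF that] by simp
    then have a: "u (Suc k) = x k $ 1 - \<alpha> k * u k" "v (Suc k) = lam * (x k $ 2 - \<alpha> k * v k)"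
      unfolding u_def v_def by (simp_all only: diagA_comp1 diagA_comp2) simp_all
    have b: "u k = x k $ 1" "v k = lam * x k $ 2" unfolding u_def v_def g_def
      by (simp_all only: diagA_comp1 diagA_comp2)
    show ?thesis using a b by (simp add: algebra_simps)
  qed
  have F2: "\<alpha> k = \<gamma> k * ((u (k-1)^2 + v (k-1)^2) / (u (k-1)^2 + lam * v (k-1)^2))
      + (1 - \<gamma> k) * ((u (k-1)^2 + lam * v (k-1)^2) / (u (k-1)^2 + lam^2 * v (k-1)^2))"
    if k2: "k \<ge> 2" and an: "\<alpha> (k-1) \<noteq> 0" for k
  proof -
    define p where "p = \<alpha> (k-1)"
    have kk: "Suc (k-1) = k" using k2 by simp
    have sx: "x k - x (k-1) = - (p *\<^sub>R g (k-1))" using step[of "k-1"] k2 kk unfolding p_def by simp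
    have f1: "u k = (1 - p) * u (k-1)" "v k = (1 - lam * p) * v (k-1)"
      using F1[of "k-1"] k2 kk unfolding p_def by auto
    have s1: "(x k - x (k-1)) $ 1 = - p * u (k-1)" "(x k - x (k-1)) $ 2 = - p * v (k-1)"
      unfolding sx u_def v_def by simp_all
    have y1: "(g k - g (k-1)) $ 1 = - p * u (k-1)" "(g k - g (k-1)) $ 2 = - lam * p * v (k-1)"
      using f1 unfolding u_def v_def by (simp_all add: algebra_simps)
    have ss: "(x k - x (k-1)) \<bullet> (x k - x (k-1)) = p^2 * (u (k-1)^2 + v (k-1)^2)"
      unfolding inner2 s1 by (simp add: power2_eq_square algebra_simps)
    have sy: "(x k - x (k-1)) \<bullet> (g k - g (k-1)) = p^2 * (u (k-1)^2 + lam * v (k-1)^2)"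
      unfolding inner2 s1 y1 by (simp add: power2_eq_square algebra_simps)
    have yy: "(g k - g (k-1)) \<bullet> (g k - g (k-1)) = p^2 * (u (k-1)^2 + lam^2 * v (k-1)^2)"
      unfolding inner2 y1 by (simp add: power2_eq_square algebra_simps)
    have pn: "p^2 \<noteq> 0" using an unfolding p_def by simp
    show ?thesis using alphak[OF k2] unfolding ss sy yy using pn by simp
  qed
  have Inv: "u (m+1) \<noteq> 0 \<and> v (m+1) \<noteq> 0 \<and> \<alpha> (m+1) \<noteq> 0 \<and> (m \<ge> 1 \<longrightarrow> 1/lam < \<alpha> (m+1) \<and> \<alpha> (m+1) < 1)" for m
  proof (induction m)
    case 0 then show ?case using g1 alpha1 unfolding u_def v_def by auto
  next
    case (Suc m)
    let ?w = "u (m+1)^2" and ?z = "v (m+1)^2"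
    have wz: "?w > 0" "?z > 0" using Suc.IH by auto
    have a: "\<alpha> (m+2) = \<gamma> (m+2) * ((?w + ?z) / (?w + lam * ?z)) + (1 - \<gamma> (m+2)) * ((?w + lam * ?z) / (?w + lam^2 * ?z))"
      using F2[of "m+2"] Suc.IH by simp
    note sa = step_alg[OF wz lam _ _ a] gamma[of "m+2"]
    have r: "1/lam < \<alpha> (m+2)" "\<alpha> (m+2) < 1" using sa by auto
    have an: "\<alpha> (m+2) \<noteq> 0" using r(1) lam by (smt (verit) divide_pos_pos)
    have uv: "u (m+2) \<noteq> 0 \<and> v (m+2) \<noteq> 0"
    proof (cases m)
      case 0 then show ?thesis using g2 unfolding u_def v_def by (simp add: numeral_eq_Suc)
    next
      case (Suc m')
      then have rr: "1/lam < \<alpha> (m+1)" "\<alpha> (m+1) < 1" using Suc.IH by auto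
      have "1 - lam * \<alpha> (m+1) \<noteq> 0" using rr(1) lam by (simp add: field_simps)
      moreover have "1 - \<alpha> (m+1) \<noteq> 0" using rr(2) by simp
      ultimately show ?thesis using F1[of "m+1"] Suc.IH by simp
    qed
    show ?case using uv an r by simp
  qed
  have nz: "u k \<noteq> 0" "v k \<noteq> 0" if "k \<ge> 1" for k
    using Inv[of "k-1"] that by auto
  define M where "M k = ln ((g k $ 1)^2 / (g k $ 2)^2)" for k
  define S where "S k = ln \<bar>u k\<bar> + ln \<bar>v k\<bar>" for k
  have Mu: "M k = ln (u k^2 / v k^2)" for k unfolding M_def u_def v_def by simp
  have Mab: "M k = 2 * ln \<bar>u k\<bar> - 2 * ln \<bar>v k\<bar>" if "k \<ge> 1" for k
  proof -
    have p: "\<bar>u k\<bar> > 0" "\<bar>v k\<bar> > 0" using nz[OF that] by auto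
    have "u k^2 / v k^2 = \<bar>u k\<bar>^2 / \<bar>v k\<bar>^2" by simp
    then have "ln (u k^2 / v k^2) = ln (\<bar>u k\<bar>^2) - ln (\<bar>v k\<bar>^2)" using p by (simp add: ln_div)
    also have "\<dots> = 2 * ln \<bar>u k\<bar> - 2 * ln \<bar>v k\<bar>" by (simp only: ln_realpow)
    finally show ?thesis unfolding Mu .
  qed
  have K: "\<bar>M (Suc k) - M k + 2 * M (k-1)\<bar> \<le> 2*L \<and> S (Suc k) \<le> S k + 3*L - \<bar>M (k-1)\<bar>"
    if k2: "k \<ge> 2" for k
  proof -
    let ?w = "u (k-1)^2" and ?z = "v (k-1)^2"
    have wz: "?w > 0" "?z > 0" using nz[of "k-1"] k2 by auto
    have an: "\<alpha> (k-1) \<noteq> 0" using Inv[of "k-2"] k2 by (simp add: Suc_diff_Suc numeral_eq_Suc)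
    have a: "\<alpha> k = \<gamma> k * ((?w + ?z) / (?w + lam * ?z)) + (1 - \<gamma> k) * ((?w + lam * ?z) / (?w + lam^2 * ?z))"
      using F2[OF k2 an] by simp
    note sa = step_alg[OF wz lam _ _ a]
    have gk: "0 < \<gamma> k" "\<gamma> k < 1" using gamma[of k] k2 by auto
    obtain \<rho> where rho: "1 \<le> \<rho>" "\<rho> \<le> lam" "1 - \<alpha> k = -(?z/?w)*\<rho>*(1-lam*\<alpha> k)"
      using sa(4)[OF gk] by blast
    have prod: "\<bar>1-\<alpha> k\<bar> * \<bar>1-lam*\<alpha> k\<bar> \<le> lam^3 * (?w*?z/(?w+?z)^2)" using sa(3)[OF gk] .
    have r: "1/lam < \<alpha> k" "\<alpha> k < 1" using sa(1,2)[OF gk] by auto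
    have n1: "1 - \<alpha> k \<noteq> 0" using r by simp
    have n2: "1 - lam * \<alpha> k \<noteq> 0" using r(1) lam by (simp add: field_simps)
    have f1: "u (Suc k) = (1 - \<alpha> k) * u k" "v (Suc k) = (1 - lam * \<alpha> k) * v k"
      using F1[of k] k2 by auto
    have uk: "u k \<noteq> 0" "v k \<noteq> 0" using nz k2 by auto
    have Mk1: "M (k-1) = ln (?w / ?z)" unfolding Mu by simp
    have ratio: "u (Suc k)^2 / v (Suc k)^2 = (u k^2 / v k^2) * ((?z/?w)^2 * \<rho>^2)"
    proof -
      have r1: "u (Suc k)^2 / v (Suc k)^2 = ((1-\<alpha> k)^2 / (1-lam*\<alpha> k)^2) * (u k^2 / v k^2)"
        unfolding f1 power_mult_distrib times_divide_times_eq ..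
      have sq0: "(1-\<alpha> k)^2 = (-(?z/?w)*\<rho>*(1-lam*\<alpha> k))^2"
        using rho(3) by (rule arg_cong)
      have sq: "(1-\<alpha> k)^2 = ((?z/?w)^2 * \<rho>^2) * (1-lam*\<alpha> k)^2"
        unfolding sq0 by (simp only: power2_eq_square mult_minus_left minus_mult_minus mult_ac)
      have r2: "(1-\<alpha> k)^2 / (1-lam*\<alpha> k)^2 = (?z/?w)^2 * \<rho>^2"
        unfolding sq using n2 by simp
      show ?thesis unfolding r1 r2 by simp
    qed
    have Xp: "(?z/?w)^2 * \<rho>^2 > 0" using wz rho(1) by simp
    have Up: "u k^2 / v k^2 > 0" using uk by simp
    have "M (Suc k) = M k + ln ((?z/?w)^2 * \<rho>^2)"
      unfolding Mu ratio by (rule ln_mult_pos[OF Up Xp])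
    also have "ln ((?z/?w)^2 * \<rho>^2) = - 2 * M (k-1) + 2 * ln \<rho>"
      unfolding Mk1 using wz rho(1) by (simp add: ln_mult ln_div ln_realpow)
    finally have d: "M (Suc k) - M k + 2 * M (k-1) = 2 * ln \<rho>" by simp
    have lr: "0 \<le> ln \<rho>" "ln \<rho> \<le> L" unfolding L_def using rho(1,2) by auto
    have part1: "\<bar>M (Suc k) - M k + 2 * M (k-1)\<bar> \<le> 2*L" unfolding d using lr by simp
    have "S (Suc k) = S k + ln (\<bar>1-\<alpha> k\<bar> * \<bar>1-lam*\<alpha> k\<bar>)"
      unfolding S_def f1 using n1 n2 uk by (simp add: abs_mult ln_mult)
    also have "ln (\<bar>1-\<alpha> k\<bar> * \<bar>1-lam*\<alpha> k\<bar>) \<le> ln (lam^3 * (?w*?z/(?w+?z)^2))"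
    proof -
      have pp: "lam^3 * (?w*?z/(?w+?z)^2) > 0" using wz lam by simp
      have pl: "\<bar>1-\<alpha> k\<bar> * \<bar>1-lam*\<alpha> k\<bar> > 0" using n1 n2 by simp
      show ?thesis using ln_le_cancel_iff[OF pl pp] prod by simp
    qed
    also have "\<dots> = 3*L + ln (?w*?z/(?w+?z)^2)"
    proof -
      have a1: "lam^3 > 0" using lam by simp
      have a2: "?w*?z/(?w+?z)^2 > 0" using wz by simp
      show ?thesis unfolding L_def ln_mult_pos[OF a1 a2] ln_realpow by simp
    qed
    also have "ln (?w*?z/(?w+?z)^2) \<le> - \<bar>M (k-1)\<bar>"
    proof -
      have q1: "?w*?z/(?w+?z)^2 \<le> ?w/?z" using frac_aux[OF wz] .
      have q2: "?w*?z/(?w+?z)^2 \<le> ?z/?w" using frac_aux[OF wz(2,1)] by (simp add: ac_simps)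
      have pos: "?w*?z/(?w+?z)^2 > 0" using wz by simp
      have "ln (?w*?z/(?w+?z)^2) \<le> ln (?w/?z)" using q1 pos by simp
      moreover have "ln (?w*?z/(?w+?z)^2) \<le> ln (?z/?w)" using q2 pos by simp
      moreover have "ln (?z/?w) = - ln (?w/?z)" using wz by (simp add: ln_div)
      ultimately show ?thesis unfolding Mk1 by linarith
    qed
    finally show ?thesis using part1 by simp
  qed
  have lim: "filterlim (\<lambda>k. (ln 2 + (S k/2 + \<bar>M k\<bar>/4)) / real k) at_bot sequentially"
  proof (rule seq_part[OF L theta])
    show "\<bar>M (Suc k) - M k + 2 * M (k-1)\<bar> \<le> 2*L" if "k \<ge> 2" for k using K[OF that] by blast
    show "S (Suc k) \<le> S k + 3*L - \<bar>M (k-1)\<bar>" if "k \<ge> 2" for k using K[OF that] by blast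
    show "cmod (complex_of_real (M 2) + (\<theta> - 1) * complex_of_real (M 1)) > 8*L"
      using xi unfolding M_def L_def .
  qed
  have lim2: "(\<lambda>k. exp ((ln 2 + (S k/2 + \<bar>M k\<bar>/4)) / real k)) \<longlonglongrightarrow> 0"
    by (rule filterlim_compose[OF exp_at_bot lim])
  show ?thesis
  proof (rule tendsto_sandwich[OF _ _ tendsto_const lim2])
    show "eventually (\<lambda>k. 0 \<le> root k (norm (g k))) sequentially"
      by (intro always_eventually allI) (simp add: real_root_ge_zero)
    have "eventually (\<lambda>k::nat. k \<ge> 1) sequentially" by (rule eventually_ge_at_top)
    then show "eventually (\<lambda>k. root k (norm (g k)) \<le> exp ((ln 2 + (S k/2 + \<bar>M k\<bar>/4)) / real k)) sequentially"
    proof eventually_elim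
      case (elim k)
      have uk: "u k \<noteq> 0" "v k \<noteq> 0" using nz elim by auto
      have T: "S k/2 + \<bar>M k\<bar>/4 = max (ln \<bar>u k\<bar>) (ln \<bar>v k\<bar>)"
      proof -
        have mx: "(a+b)/2 + \<bar>2*a-2*b\<bar>/4 = max a b" for a b :: real by (auto simp: max_def abs_if field_simps)
        show ?thesis unfolding S_def Mab[OF elim] by (rule mx)
      qed
      have "norm (g k) \<le> \<bar>u k\<bar> + \<bar>v k\<bar>" unfolding u_def v_def by (rule norm2_le)
      also have "\<dots> \<le> 2 * exp (S k/2 + \<bar>M k\<bar>/4)"
      proof -
        have "\<bar>u k\<bar> \<le> exp (S k/2 + \<bar>M k\<bar>/4)" "\<bar>v k\<bar> \<le> exp (S k/2 + \<bar>M k\<bar>/4)"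
          unfolding T using uk by (auto simp: max_def)
        then show ?thesis by simp
      qed
      finally have nb: "norm (g k) \<le> 2 * exp (S k/2 + \<bar>M k\<bar>/4)" .
      have k0: "0 < k" using elim by simp
      have "root k (norm (g k)) \<le> root k (2 * exp (S k/2 + \<bar>M k\<bar>/4))"
        using nb k0 by (subst real_root_le_iff) auto
      also have "\<dots> = exp ((ln 2 + (S k/2 + \<bar>M k\<bar>/4)) / real k)"
        using k0 by (simp add: root_powr_inverse powr_def ln_mult)
      finally show ?case .
    qed
  qed
qed

end
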